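(* Let $(\Sigma_+,\Sigma_-,N_1,N_2,N_3)$ be a solution of the Wainwright–Hsu system satisfying the constraint, with $N_1=0$, $N_2,N_3>0$ and $\Sigma_-^2+(N_2-N_3)^2>0$. Then for every $p>1$, $1+\Sigma_+\in L^p([0,\infty))$.
   Context: Wainwright–Hsu system: for functions $N_1,N_2,N_3,\Sigma_+,\Sigma_-$ of $\tau\in\mathbb{R}$ (prime denotes $d/d\tau$), $N_1'=(q-4\Sigma_+)N_1$, $N_2'=(q+2\Sigma_++2\sqrt3\Sigma_-)N_2$, $N_3'=(q+2\Sigma_+-2\sqrt3\Sigma_-)N_3$, $\Sigma_+'=-(2-q)\Sigma_+-3S_+$, $\Sigma_-'=-(2-q)\Sigma_--3S_-$, where $q=2(\Sigma_+^2+\Sigma_-^2)$, $S_+=\frac12[(N_2-N_3)^2-N_1(2N_1-N_2-N_3)]$, $S_-=\frac{\sqrt3}{2}(N_3-N_2)(N_1-N_2-N_3)$, together with the constraint $\Sigma_+^2+\Sigma_-^2+\frac34[N_1^2+N_2^2+N_3^2-2(N_1N_2+N_2N_3+N_1N_3)]=1$. Solutions exist for all $\tau\in\mathbb{R}$. *)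

theory Defs
  imports "HOL-Analysis.Analysis"
begin

definition WH_q :: "real \<Rightarrow> real \<Rightarrow> real" where
  "WH_q sp sm = 2 * (sp^2 + sm^2)"

definition WH_Sp :: "real \<Rightarrow> real \<Rightarrow> real \<Rightarrow> real" where
  "WH_Sp n1 n2 n3 = (1/2) * ((n2 - n3)^2 - n1 * (2*n1 - n2 - n3))"

definition WH_Sm :: "real \<Rightarrow> real \<Rightarrow> real \<Rightarrow> real" where
  "WH_Sm n1 n2 n3 = (sqrt 3 / 2) * (n3 - n2) * (n1 - n2 - n3)"

definition WH_solution ::
  "(real \<Rightarrow> real) \<Rightarrow> (real \<Rightarrow> real) \<Rightarrow> (real \<Rightarrow> real) \<Rightarrow> (real \<Rightarrow> real) \<Rightarrow> (real \<Rightarrow> real) \<Rightarrow> bool" where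
  "WH_solution N1 N2 N3 Sp Sm \<longleftrightarrow>
    (\<forall>t. (N1 has_real_derivative (WH_q (Sp t) (Sm t) - 4 * Sp t) * N1 t) (at t)
       \<and> (N2 has_real_derivative (WH_q (Sp t) (Sm t) + 2 * Sp t + 2 * sqrt 3 * Sm t) * N2 t) (at t)
       \<and> (N3 has_real_derivative (WH_q (Sp t) (Sm t) + 2 * Sp t - 2 * sqrt 3 * Sm t) * N3 t) (at t)
       \<and> (Sp has_real_derivative (- (2 - WH_q (Sp t) (Sm t)) * Sp t - 3 * WH_Sp (N1 t) (N2 t) (N3 t))) (at t)
       \<and> (Sm has_real_derivative (- (2 - WH_q (Sp t) (Sm t)) * Sm t - 3 * WH_Sm (N1 t) (N2 t) (N3 t))) (at t)
       \<and> (Sp t)^2 + (Sm t)^2 + (3/4) * ((N1 t)^2 + (N2 t)^2 + (N3 t)^2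
            - 2 * (N1 t * N2 t + N2 t * N3 t + N1 t * N3 t)) = 1)"

end

theory Submission
  imports Defs
begin

lemma tail_integrable:
  fixes Z :: "real \<Rightarrow> real"
  assumes cont: "continuous_on UNIV Z" and T: "T > 0" and K: "K \<ge> 0"
    and bnd: "\<And>t. t \<ge> T \<Longrightarrow> \<bar>Z t\<bar> \<le> K / t" and p: "p > 1"
  shows "set_integrable lborel {0..} (\<lambda>t. \<bar>Z t\<bar> powr p)"
proof -
  have fc: "continuous_on UNIV (\<lambda>t. \<bar>Z t\<bar> powr p)"
    using p by (intro continuous_on_powr' continuous_intros cont) auto
  have A: "set_integrable lborel {0..T} (\<lambda>t. \<bar>Z t\<bar> powr p)"
    by (rule borel_integrable_atLeastAtMost') (rule continuous_on_subset[OF fc], simp)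
  have "(\<lambda>x. x powr (-p)) integrable_on {T..}"
    using has_integral_powr_to_inf[of "-p" T] p T unfolding integrable_on_def by auto
  hence "(\<lambda>x. K powr p * x powr (-p)) integrable_on {T..}"
    using integrable_cmul[where c="K powr p" and f="\<lambda>x. x powr (-p)" and S="{T..}"] by (simp add: real_scaleR_def)
  hence "(\<lambda>x. K powr p * x powr (-p)) absolutely_integrable_on {T..}"
    by (subst absolutely_integrable_on_iff_nonneg) auto
  hence "integrable lebesgue (\<lambda>x. indicator {T..} x *\<^sub>R (K powr p * x powr (-p)))"
    unfolding set_integrable_def .
  hence G: "set_integrable lborel {T..} (\<lambda>x. K powr p * x powr (-p))"
    unfolding set_integrable_def
    by (subst (asm) integrable_completion) measurable
  have B: "set_integrable lborel {T..} (\<lambda>t. \<bar>Z t\<bar> powr p)"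
  proof (rule set_integrable_bound[OF G])
    show "set_borel_measurable lborel {T..} (\<lambda>t. \<bar>Z t\<bar> powr p)"
      unfolding set_borel_measurable_def
      using borel_measurable_continuous_onI[OF fc] by measurable
    show "AE x in lborel. x \<in> {T..} \<longrightarrow> norm (\<bar>Z x\<bar> powr p) \<le> norm (K powr p * x powr - p)"
    proof (intro AE_I2 impI)
      fix x assume x: "x \<in> {T..}"
      hence x0: "x > 0" using T by auto
      have "\<bar>Z x\<bar> powr p \<le> (K / x) powr p"
        using bnd[of x] x p by (intro powr_mono2) auto
      also have "\<dots> = K powr p * x powr - p"
        using x0 K powr_divide[of K x p] by (simp add: powr_minus divide_inverse)
      finally show "norm (\<bar>Z x\<bar> powr p) \<le> norm (K powr p * x powr - p)" by simp
    qed
  qed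
  have "set_integrable lborel ({0..T} \<union> {T..}) (\<lambda>t. \<bar>Z t\<bar> powr p)"
    by (rule set_integrable_Un[OF A B]) auto
  moreover have "{0..T} \<union> {T..} = {0::real..}" using T by auto
  ultimately show ?thesis by simp
qed



lemma Wbound:
  fixes a d m p z \<delta> \<eta> :: real
  assumes z: "0 < z" and a: "0 \<le> a" and key: "a + 3/4*d^2 = z*(2-z)"
    and mm: "m^2 = d^2 + 4*p" and p: "p > 0" and pd: "p \<ge> \<delta>*z" and dl: "\<delta> > 0"
    and et: "\<eta> \<le> 2 - z" "\<eta> > 0"
  shows "\<eta>*3*\<delta>/(2+3*\<delta>) \<le> (a + 3/4*d^2 - a*d^2/m^2)/z"
proof -
  define y where "y = 3/4*d^2"
  define R where "R = z*(2-z)"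
  have y0: "0 \<le> y" unfolding y_def by simp
  have aR: "a = R - y" using key unfolding R_def y_def by simp
  have yR: "y \<le> R" using aR a by simp
  have R0: "0 \<le> R" using y0 yR by simp
  have z2: "z < 2" using et by simp
  have e1: "a*d^2/m^2 = a*y/(y+3*p)"
  proof -
    have "d^2 + p*4 > 0" "p*12 + 3*d^2 > 0" using p by (auto intro: add_nonneg_pos add_pos_nonneg)
    thus ?thesis unfolding mm y_def by (simp add: field_simps)
  qed
  have f1: "y/(y+3*p) \<le> R/(R+3*p)"
    using y0 yR p R0 by (simp add: field_simps mult_left_mono)
  have "a*y/(y+3*p) = a * (y/(y+3*p))" by simp
  also have "\<dots> \<le> R * (R/(R+3*p))"
    using f1 aR y0 p R0 by (intro mult_mono) auto
  finally have e2: "a*y/(y+3*p) \<le> R*R/(R+3*p)" by simp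
  have e3: "R - R*R/(R+3*p) = 3*p*R/(R+3*p)" using p R0 by (simp add: field_simps)
  have num: "3*p*R/(R+3*p) \<le> a + 3/4*d^2 - a*d^2/m^2"
    using e1 e2 e3 key unfolding R_def by simp
  have c1: "9*\<delta>*\<eta>*p \<le> 9*\<delta>*p*(2-z)"
    using et dl p by (simp add: mult_left_mono)
  have c2: "3*\<delta>*\<eta>*z \<le> 6*p"
  proof -
    have "3*\<delta>*\<eta>*z \<le> 3*\<delta>*2*z" using et z dl z2 by (simp add: mult_left_mono)
    also have "\<dots> \<le> 6*p" using pd by simp
    finally show ?thesis .
  qed
  have c3: "3*\<delta>*\<eta>*z*(2-z) \<le> 6*p*(2-z)" using c2 z2 by (simp add: mult_right_mono)
  have cross: "\<eta>*3*\<delta>*(R+3*p) \<le> 3*p*(2-z)*(2+3*\<delta>)"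
    using c1 c3 unfolding R_def by (simp add: algebra_simps)
  have "\<eta>*3*\<delta>/(2+3*\<delta>) \<le> 3*p*(2-z)/(R+3*p)"
    using cross dl p R0 by (simp add: field_simps)
  also have "3*p*(2-z)/(R+3*p) = (3*p*R/(R+3*p))/z"
  proof -
    have Rp: "R + 3*p \<noteq> 0" using R0 p by simp
    have e: "3*p*R = (3*p*(2-z))*z" by (simp add: R_def)
    have "(3*p*R/(R+3*p))/z = ((3*p*(2-z))*z)/(R+3*p)/z" by (simp only: e)
    also have "\<dots> = 3*p*(2-z)/(R+3*p)" using z by simp
    finally show ?thesis by simp
  qed
  also have "\<dots> \<le> (a + 3/4*d^2 - a*d^2/m^2)/z" using divide_right_mono[OF num, of z] z by simp
  finally show ?thesis .
qed


locale wh7 =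
  fixes N2 N3 Sp Sm :: "real \<Rightarrow> real"
  assumes sol: "WH_solution (\<lambda>_. 0) N2 N3 Sp Sm"
    and N2p: "\<And>t. N2 t > 0" and N3p: "\<And>t. N3 t > 0"
begin

definition "Z t = 1 + Sp t"
definition "D t = N2 t - N3 t"
definition "M t = N2 t + N3 t"
definition "P t = N2 t * N3 t"

lemma s3: "sqrt 3 * sqrt 3 = (3::real)" by simp
lemma s3': "sqrt 3 * (sqrt 3 * x) = (3::real) * x" by (simp add: mult.assoc[symmetric])

lemma con: "(Sp t)^2 + (Sm t)^2 + 3/4 * (D t)^2 = 1"
  using sol unfolding WH_solution_def D_def by (auto simp: power2_eq_square algebra_simps)

lemma raw:
  "(N2 has_real_derivative (WH_q (Sp t) (Sm t) + 2 * Sp t + 2 * sqrt 3 * Sm t) * N2 t) (at t)"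
  "(N3 has_real_derivative (WH_q (Sp t) (Sm t) + 2 * Sp t - 2 * sqrt 3 * Sm t) * N3 t) (at t)"
  "(Sp has_real_derivative (- (2 - WH_q (Sp t) (Sm t)) * Sp t - 3 * WH_Sp 0 (N2 t) (N3 t))) (at t)"
  "(Sm has_real_derivative (- (2 - WH_q (Sp t) (Sm t)) * Sm t - 3 * WH_Sm 0 (N2 t) (N3 t))) (at t)"
  using sol unfolding WH_solution_def by auto

lemma qv: "WH_q (Sp t) (Sm t) = 2 - 3/2 * (D t)^2"
  using con[of t] unfolding WH_q_def by (simp add: algebra_simps)

lemma dZ: "(Z has_real_derivative (-(3/2) * (D t)^2 * Z t)) (at t)"
proof -
  have "(Z has_real_derivative (- (2 - WH_q (Sp t) (Sm t)) * Sp t - 3 * WH_Sp 0 (N2 t) (N3 t))) (at t)"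
    unfolding Z_def[abs_def] by (rule derivative_eq_intros raw refl | simp)+
  moreover have "- (2 - WH_q (Sp t) (Sm t)) * Sp t - 3 * WH_Sp 0 (N2 t) (N3 t) = -(3/2) * (D t)^2 * Z t"
    unfolding qv WH_Sp_def Z_def D_def by (simp add: field_simps power2_eq_square)
  ultimately show ?thesis by simp
qed

lemma dX: "(Sm has_real_derivative (-(3/2) * (D t)^2 * Sm t - 3 * sqrt 3 / 2 * D t * M t)) (at t)"
proof -
  have "- (2 - WH_q (Sp t) (Sm t)) * Sm t - 3 * WH_Sm 0 (N2 t) (N3 t) = -(3/2) * (D t)^2 * Sm t - 3 * sqrt 3 / 2 * D t * M t"
    unfolding qv WH_Sm_def M_def D_def by (simp add: algebra_simps power2_eq_square)
  with raw(4)[of t] show ?thesis by simp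
qed

lemma dD: "(D has_real_derivative ((2 * Z t - 3/2 * (D t)^2) * D t + 2 * sqrt 3 * Sm t * M t)) (at t)"
proof -
  have "(D has_real_derivative (WH_q (Sp t) (Sm t) + 2 * Sp t + 2 * sqrt 3 * Sm t) * N2 t - (WH_q (Sp t) (Sm t) + 2 * Sp t - 2 * sqrt 3 * Sm t) * N3 t) (at t)"
    unfolding D_def[abs_def] by (rule derivative_eq_intros raw refl)+
  moreover have "(WH_q (Sp t) (Sm t) + 2 * Sp t + 2 * sqrt 3 * Sm t) * N2 t - (WH_q (Sp t) (Sm t) + 2 * Sp t - 2 * sqrt 3 * Sm t) * N3 t = (2 * Z t - 3/2 * (D t)^2) * D t + 2 * sqrt 3 * Sm t * M t"
    unfolding qv Z_def M_def D_def by (simp add: field_simps power2_eq_square)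
  ultimately show ?thesis by simp
qed

lemma dM: "(M has_real_derivative ((2 * Z t - 3/2 * (D t)^2) * M t + 2 * sqrt 3 * Sm t * D t)) (at t)"
proof -
  have "(M has_real_derivative (WH_q (Sp t) (Sm t) + 2 * Sp t + 2 * sqrt 3 * Sm t) * N2 t + (WH_q (Sp t) (Sm t) + 2 * Sp t - 2 * sqrt 3 * Sm t) * N3 t) (at t)"
    unfolding M_def[abs_def] by (rule derivative_eq_intros raw refl)+
  moreover have "(WH_q (Sp t) (Sm t) + 2 * Sp t + 2 * sqrt 3 * Sm t) * N2 t + (WH_q (Sp t) (Sm t) + 2 * Sp t - 2 * sqrt 3 * Sm t) * N3 t = (2 * Z t - 3/2 * (D t)^2) * M t + 2 * sqrt 3 * Sm t * D t"
    unfolding qv Z_def M_def D_def by (simp add: field_simps power2_eq_square)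
  ultimately show ?thesis by simp
qed

lemma dP: "(P has_real_derivative ((4 * Z t - 3 * (D t)^2) * P t)) (at t)"
proof -
  have "(P has_real_derivative (WH_q (Sp t) (Sm t) + 2 * Sp t + 2 * sqrt 3 * Sm t) * N2 t * N3 t + (WH_q (Sp t) (Sm t) + 2 * Sp t - 2 * sqrt 3 * Sm t) * N3 t * N2 t) (at t)"
    unfolding P_def[abs_def] by (rule derivative_eq_intros raw refl)+
  moreover have "(WH_q (Sp t) (Sm t) + 2 * Sp t + 2 * sqrt 3 * Sm t) * N2 t * N3 t + (WH_q (Sp t) (Sm t) + 2 * Sp t - 2 * sqrt 3 * Sm t) * N3 t * N2 t = (4 * Z t - 3 * (D t)^2) * P t"
    unfolding qv Z_def P_def D_def by (simp add: field_simps power2_eq_square)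
  ultimately show ?thesis by simp
qed


lemma Mpos: "M t > 0" using N2p[of t] N3p[of t] unfolding M_def by simp

definition "W t = (1 + sqrt 3 * Sm t * D t / (6 * M t)) / Z t"

lemma dW: assumes "Z t > 0"
  shows "(W has_real_derivative ((Sm t)^2 + 3/4*(D t)^2 - (Sm t)^2*(D t)^2/(M t)^2)/Z t) (at t)"
  unfolding W_def[abs_def]
  apply (rule derivative_eq_intros dX dD dM dZ refl)+
  using assms Mpos[of t] apply simp_all
  apply (rule dZ)
  apply (simp add: field_simps power2_eq_square s3')
  done


lemma key: "(Sm t)^2 + 3/4*(D t)^2 = Z t * (2 - Z t)"
  using con[of t] unfolding Z_def by (simp add: algebra_simps power2_eq_square)

lemma Zrange: "0 \<le> Z t" "Z t \<le> 2"
proof -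
  have "(Sp t)^2 \<le> 1" using con[of t] zero_le_power2[of "Sm t"] zero_le_power2[of "D t"] by linarith
  hence "(Z t - 1)^2 \<le> 1" unfolding Z_def by simp
  hence "\<bar>Z t - 1\<bar> \<le> 1" using abs_square_le_1 by blast
  thus "0 \<le> Z t" "Z t \<le> 2" by auto
qed

lemma Zanti: assumes "s \<le> t" shows "Z t \<le> Z s"
proof (rule DERIV_nonpos_imp_nonincreasing[OF assms])
  fix x show "\<exists>y. DERIV Z x :> y \<and> y \<le> 0"
    using dZ[of x] Zrange[of x] by (intro exI[of _ "-(3/2) * (D x)^2 * Z x"]) (auto simp: mult_nonneg_nonneg)
qed

lemma Dle: "\<bar>D t\<bar> \<le> M t" using N2p[of t] N3p[of t] unfolding D_def M_def by auto
lemma Smle: "\<bar>Sm t\<bar> \<le> 1"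
proof -
  have "(Sm t)^2 \<le> 1" using con[of t] zero_le_power2[of "Sp t"] zero_le_power2[of "D t"] by linarith
  thus ?thesis using abs_square_le_1 by blast
qed
lemma MP: "(M t)^2 = (D t)^2 + 4 * P t" unfolding M_def D_def P_def by (simp add: power2_eq_square algebra_simps)
lemma Ppos: "P t > 0" using N2p[of t] N3p[of t] unfolding P_def by simp

lemma s32: "sqrt 3 \<le> (2::real)"
proof -
  have "sqrt 3 \<le> sqrt ((2::real)^2)" by (rule real_sqrt_le_mono) simp
  thus ?thesis by simp
qed

lemma ubound: "\<bar>sqrt 3 * Sm t * D t / (6 * M t)\<bar> \<le> 1/2"
proof -
  have "\<bar>sqrt 3 * Sm t * D t\<bar> = sqrt 3 * (\<bar>Sm t\<bar> * \<bar>D t\<bar>)" by (simp add: abs_mult)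
  also have "\<dots> \<le> 2 * (1 * M t)"
    using Smle[of t] Dle[of t] s32 by (intro mult_mono) auto
  finally have "\<bar>sqrt 3 * Sm t * D t\<bar> \<le> 2 * M t" by simp
  moreover have "\<bar>sqrt 3 * Sm t * D t / (6 * M t)\<bar> = \<bar>sqrt 3 * Sm t * D t\<bar> / (6 * M t)"
    using Mpos[of t] by (simp add: abs_divide)
  ultimately show ?thesis using Mpos[of t] by (simp add: divide_le_eq)
qed

lemma ZW: assumes "Z t > 0" shows "Z t * W t = 1 + sqrt 3 * Sm t * D t / (6 * M t)"
  using assms unfolding W_def by simp

lemma decay:
  assumes nd: "\<exists>t. (Sm t)^2 + (D t)^2 > 0"
  shows "\<exists>T>0. \<exists>K\<ge>0. \<forall>t\<ge>T. \<bar>Z t\<bar> \<le> K / t"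
proof (cases "\<exists>t\<ge>1. Z t \<le> 0")
  case True
  then obtain t1 where t1: "t1 \<ge> 1" "Z t1 \<le> 0" by auto
  have "\<forall>t\<ge>t1. \<bar>Z t\<bar> \<le> 0 / t"
  proof (intro allI impI)
    fix t assume "t1 \<le> t"
    hence "Z t \<le> Z t1" by (rule Zanti)
    thus "\<bar>Z t\<bar> \<le> 0 / t" using t1 Zrange[of t] by simp
  qed
  thus ?thesis using t1 by (intro exI[of _ t1] conjI exI[of _ 0]) auto
next
  case False
  hence Zp1: "\<And>t. t \<ge> 1 \<Longrightarrow> Z t > 0" by force
  obtain t0 where t0: "(Sm t0)^2 + (D t0)^2 > 0" using nd by auto
  have Zt02: "Z t0 < 2"
  proof (rule ccontr)
    assume "\<not> Z t0 < 2"
    hence "Z t0 = 2" using Zrange[of t0] by simp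
    hence "(Sm t0)^2 + 3/4*(D t0)^2 = 0" using key[of t0] by simp
    hence "(Sm t0)^2 = 0 \<and> (D t0)^2 = 0"
      using zero_le_power2[of "Sm t0"] zero_le_power2[of "D t0"] by linarith
    thus False using t0 by simp
  qed
  define T where "T = max 1 t0"
  have T1: "T \<ge> 1" and Tt0: "T \<ge> t0" unfolding T_def by auto
  have ZTp: "Z T > 0" using Zp1 T1 by simp
  have ZT2: "Z T < 2" using Zanti[OF Tt0] Zt02 by simp
  have Zpos: "\<And>s. s \<ge> T \<Longrightarrow> Z s > 0" using Zp1 T1 by simp
  have ZleT: "\<And>s. s \<ge> T \<Longrightarrow> Z s \<le> Z T" using Zanti by simp
  define L where "L s = 1 / Z T + 4 * (s - T)" for s
  have h1: "1 / Z s \<le> L s" if s: "s \<ge> T" for s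
  proof -
    have "(\<lambda>s. 1 / Z s - 4 * s) s \<le> (\<lambda>s. 1 / Z s - 4 * s) T"
    proof (rule DERIV_nonpos_imp_nonincreasing[OF s])
      fix x assume x: "T \<le> x" "x \<le> s"
      have Zx: "Z x > 0" using Zpos x by simp
      have d: "((\<lambda>s. 1 / Z s - 4 * s) has_real_derivative (3/2) * (D x)^2 / Z x - 4) (at x)"
        using Zx by (auto intro!: derivative_eq_intros dZ simp: field_simps power2_eq_square)
      have "Z x * (2 - Z x) \<le> 2 * Z x" using Zrange[of x] by (simp add: algebra_simps)
      hence "(3/2) * (D x)^2 \<le> 4 * Z x"
        using key[of x] zero_le_power2[of "Sm x"] by linarith
      hence "(3/2) * (D x)^2 / Z x \<le> 4" using Zx by (simp add: divide_le_eq)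
      thus "\<exists>y. DERIV (\<lambda>s. 1 / Z s - 4 * s) x :> y \<and> y \<le> 0" using d by (intro exI conjI) auto
    qed
    thus ?thesis unfolding L_def by simp
  qed
  have Lpos: "L s > 0" if "s \<ge> T" for s unfolding L_def using that ZTp by (simp add: add_pos_nonneg)
  have ZL: "Z s * L s \<ge> 1" if s: "s \<ge> T" for s
    using h1[OF s] Zpos[OF s] by (simp add: divide_le_eq mult.commute)
  define \<delta> where "\<delta> = P T / Z T"
  have dpos: "\<delta> > 0" unfolding \<delta>_def using Ppos ZTp by simp
  have h2: "P s \<ge> \<delta> * Z s" if s: "s \<ge> T" for s
  proof -
    have "(\<lambda>s. ln (P s) - 2 * ln (Z s) - ln (L s)) T \<le> (\<lambda>s. ln (P s) - 2 * ln (Z s) - ln (L s)) s"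
    proof (rule DERIV_nonneg_imp_nondecreasing[OF s])
      fix x assume x: "T \<le> x" "x \<le> s"
      have Zx: "Z x > 0" using Zpos x by simp
      have Lx: "L x > 0" using Lpos x by simp
      have dL: "(L has_real_derivative 4) (at x)" unfolding L_def[abs_def]
        by (auto intro!: derivative_eq_intros)
      have d: "((\<lambda>s. ln (P s) - 2 * ln (Z s) - ln (L s)) has_real_derivative 4 * Z x - 4 / L x) (at x)"
        using Zx Lx Ppos[of x]
        by (auto intro!: derivative_eq_intros dZ dP dL simp: field_simps power2_eq_square)
      have "1 / L x \<le> Z x" using ZL[of x] x Lx by (simp add: divide_le_eq mult.commute)
      hence "4 / L x \<le> 4 * Z x" by simp
      thus "\<exists>y. DERIV (\<lambda>s. ln (P s) - 2 * ln (Z s) - ln (L s)) x :> y \<and> 0 \<le> y"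
        using d by (intro exI conjI) auto
    qed
    hence A: "ln (P T) - 2 * ln (Z T) - ln (L T) \<le> ln (P s) - 2 * ln (Z s) - ln (L s)" by simp
    have LT: "ln (L T) = - ln (Z T)" unfolding L_def using ZTp by (simp add: ln_div)
    have "0 \<le> ln (Z s * L s)" using ZL[OF s] by simp
    hence "0 \<le> ln (Z s) + ln (L s)" using Zpos[OF s] Lpos[OF s] by (simp add: ln_mult)
    hence "ln (P T) - ln (Z T) \<le> ln (P s) - ln (Z s)" using A LT by simp
    hence "ln (P T / Z T) \<le> ln (P s / Z s)" using Ppos[of T] Ppos[of s] ZTp Zpos[OF s] by (simp add: ln_div)
    hence "P T / Z T \<le> P s / Z s" using Ppos[of T] Ppos[of s] ZTp Zpos[OF s] by simp
    thus ?thesis unfolding \<delta>_def using Zpos[OF s] by (simp add: le_divide_eq)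
  qed
  define \<eta> where "\<eta> = 2 - Z T"
  have epos: "\<eta> > 0" unfolding \<eta>_def using ZT2 by simp
  define c where "c = \<eta>*3*\<delta>/(2+3*\<delta>)"
  have cpos: "c > 0" unfolding c_def using epos dpos by simp
  have h3: "W T + c * (s - T) \<le> W s" if s: "s \<ge> T" for s
  proof -
    have "(\<lambda>s. W s - c * s) T \<le> (\<lambda>s. W s - c * s) s"
    proof (rule DERIV_nonneg_imp_nondecreasing[OF s])
      fix x assume x: "T \<le> x" "x \<le> s"
      have Zx: "Z x > 0" using Zpos x by simp
      have d: "((\<lambda>s. W s - c * s) has_real_derivative ((Sm x)^2 + 3/4*(D x)^2 - (Sm x)^2*(D x)^2/(M x)^2)/Z x - c) (at x)"
        using Zx by (auto intro!: derivative_eq_intros dW)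
      have "c \<le> ((Sm x)^2 + 3/4*(D x)^2 - (Sm x)^2*(D x)^2/(M x)^2)/Z x"
        unfolding c_def
        by (rule Wbound[OF Zx _ key MP Ppos h2 dpos]) (use x ZleT[of x] ZT2 in \<open>auto simp: \<eta>_def epos\<close>)
      thus "\<exists>y. DERIV (\<lambda>s. W s - c * s) x :> y \<and> 0 \<le> y"
        using d by (intro exI conjI) auto
    qed
    thus ?thesis by (simp add: algebra_simps)
  qed
  have WTpos: "W T > 0"
  proof -
    have "Z T * W T \<ge> 1/2" using ZW[OF ZTp] ubound[of T] by linarith
    hence "Z T * W T > 0" by simp
    thus ?thesis using ZTp by (simp add: zero_less_mult_iff)
  qed
  define m where "m = min (W T / T) c"
  have mpos: "m > 0" unfolding m_def using WTpos T1 cpos by simp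
  have "\<forall>t\<ge>T. \<bar>Z t\<bar> \<le> (3/(2*m)) / t"
  proof (intro allI impI)
    fix t assume t: "T \<le> t"
    have "m \<le> W T / T" unfolding m_def by simp
    hence "m * T \<le> W T" using T1 by (simp add: le_divide_eq)
    moreover have "m * (t - T) \<le> c * (t - T)" unfolding m_def using t by (simp add: mult_right_mono)
    ultimately have Wt: "m * t \<le> W t" using h3[OF t] by (simp add: algebra_simps)
    have Zt: "Z t > 0" using Zpos t by simp
    have "Z t * W t \<le> 3/2" using ZW[OF Zt] ubound[of t] by linarith
    moreover have "Z t * (m * t) \<le> Z t * W t" using Wt Zt by (simp add: mult_left_mono)
    ultimately have "Z t * (m * t) \<le> 3/2" by linarith
    hence "Z t \<le> (3/2) / (m * t)" using mpos T1 t by (simp add: le_divide_eq)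
    thus "\<bar>Z t\<bar> \<le> (3/(2*m)) / t" using Zt by simp
  qed
  thus ?thesis using T1 mpos by (intro exI[of _ T] conjI exI[of _ "3/(2*m)"]) auto
qed

end

theorem mainTheorem11:
  fixes N1 N2 N3 Sp Sm :: "real \<Rightarrow> real"
  assumes sol: "WH_solution N1 N2 N3 Sp Sm"
    and N1z: "\<forall>t. N1 t = 0"
    and N2p: "\<forall>t. N2 t > 0"
    and N3p: "\<forall>t. N3 t > 0"
    and nondeg: "\<exists>t. (Sm t)^2 + (N2 t - N3 t)^2 > 0"
  shows "\<forall>p::real. p > 1 \<longrightarrow>
           set_integrable lborel {0..} (\<lambda>t. \<bar>1 + Sp t\<bar> powr p)"
proof (intro allI impI)
  fix p :: real assume p: "p > 1"
  have N1: "N1 = (\<lambda>_. 0)" by (rule ext) (simp add: N1z)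
  interpret w: wh7 N2 N3 Sp Sm
    using sol N1 N2p N3p by unfold_locales auto
  have nd: "\<exists>t. (Sm t)^2 + (w.D t)^2 > 0" using nondeg by (simp add: w.D_def)
  obtain T K where TK: "T > 0" "K \<ge> 0" "\<forall>t\<ge>T. \<bar>w.Z t\<bar> \<le> K / t"
    using w.decay[OF nd] by blast
  have cont: "continuous_on UNIV w.Z"
    by (rule continuous_at_imp_continuous_on) (use w.dZ DERIV_isCont in blast)
  have "set_integrable lborel {0..} (\<lambda>t. \<bar>w.Z t\<bar> powr p)"
    by (rule tail_integrable[OF cont TK(1,2) _ p]) (use TK(3) in auto)
  thus "set_integrable lborel {0..} (\<lambda>t. \<bar>1 + Sp t\<bar> powr p)" by (simp add: w.Z_def)
qed

end
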